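(* Let $(Z,d)$ be a compact metric space which admits a homogeneous approximation graph. Then $Z$ has finite Assouad dimension.
   Context: A homogeneous approximation graph for $(Z,d)$ is given by a refining sequence $(\mathcal V_n)_{n\ge0}$ of finite open covers of $Z$ (so $\mathcal V_0=\{Z\}$, every element of $\mathcal V_{n+1}$ is contained in some element of $\mathcal V_n$, and $\max_{V\in\mathcal V_n}\operatorname{diam}V\to0$), together with constants $\lambda>1$, $0<\eta\le\theta$ and $C_\Gamma,N_\Gamma\in\mathbb N$ such that for every $n\in\mathbb N$: (1) $\max_{V\in\mathcal V_n}\operatorname{diam}(V)\le\lambda^{-n+1}\theta$; (2) $\operatorname{Leb}(\mathcal V_n)\ge\lambda^{-n+1}\eta$, where $\operatorname{Leb}(\mathcal U)=\min_{z\in Z}\max_{U\in\mathcal U}d(z,Z\setminus U)$; (3) each $v\in\mathcal V_n$ contains at most $C_\Gamma$ elements of $\mathcal V_{n+1}$, i.e. $\#\{w\in\mathcal V_{n+1}:w\subset v\}\le C_\Gamma$; (4) $\#\{w\in\mathcal V_n:w\cap v\ne\varnothing\}\le N_\Gamma$ for every $v\in\mathcal V_n$. The Assouad dimension is the infimum of $s\ge0$ for which there is $C$ with $\#Y\le C(b/a)^s$ whenever $0<a\le b$ and $Y\subset Z$ is finite with $a\le d(y,y')\le b$ for all distinct $y,y'\in Y$. *)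

theory Defs
  imports "HOL-Analysis.Analysis" "HOL-Library.Extended_Real"
begin

definition dist_compl :: "'a::metric_space set \<Rightarrow> 'a set \<Rightarrow> 'a \<Rightarrow> ereal" where
  "dist_compl Z U z = (if Z - U = {} then \<infinity> else ereal (infdist z (Z - U)))"

definition lebesgue_number :: "'a::metric_space set \<Rightarrow> 'a set set \<Rightarrow> ereal" where
  "lebesgue_number Z \<U> = (INF z\<in>Z. SUP U\<in>\<U>. dist_compl Z U z)"

definition finite_open_cover :: "'a::metric_space set \<Rightarrow> 'a set set \<Rightarrow> bool" where
  "finite_open_cover Z \<U> \<longleftrightarrow> finite \<U> \<and> (\<forall>U\<in>\<U>. openin (top_of_set Z) U) \<and> \<Union>\<U> = Z"

definition homogeneous_approximation_graph ::
  "'a::metric_space set \<Rightarrow> (nat \<Rightarrow> 'a set set) \<Rightarrow> real \<Rightarrow> real \<Rightarrow> real \<Rightarrow> nat \<Rightarrow> nat \<Rightarrow> bool" where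
  "homogeneous_approximation_graph Z \<V> lam \<eta> \<theta> C\<Gamma> N\<Gamma> \<longleftrightarrow>
     (\<forall>n. finite_open_cover Z (\<V> n)) \<and>
     \<V> 0 = {Z} \<and>
     (\<forall>n. \<forall>W\<in>\<V> (Suc n). \<exists>V\<in>\<V> n. W \<subseteq> V) \<and>
     (\<forall>\<epsilon>>0. \<exists>N. \<forall>n\<ge>N. \<forall>V\<in>\<V> n. diameter V < \<epsilon>) \<and>
     lam > 1 \<and> 0 < \<eta> \<and> \<eta> \<le> \<theta> \<and>
     (\<forall>n\<ge>1.
        (\<forall>V\<in>\<V> n. diameter V \<le> lam powr (1 - real n) * \<theta>) \<and>
        lebesgue_number Z (\<V> n) \<ge> ereal (lam powr (1 - real n) * \<eta>) \<and>
        (\<forall>v\<in>\<V> n. card {w\<in>\<V> (Suc n). w \<subseteq> v} \<le> C\<Gamma>) \<and>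
        (\<forall>v\<in>\<V> n. card {w\<in>\<V> n. w \<inter> v \<noteq> {}} \<le> N\<Gamma>))"

definition assouad_admissible :: "'a::metric_space set \<Rightarrow> real \<Rightarrow> bool" where
  "assouad_admissible Z s \<longleftrightarrow> s \<ge> 0 \<and> (\<exists>C::real. \<forall>a b Y. 0 < a \<longrightarrow> a \<le> b \<longrightarrow> Y \<subseteq> Z \<longrightarrow> finite Y \<longrightarrow>
      (\<forall>y\<in>Y. \<forall>y'\<in>Y. y \<noteq> y' \<longrightarrow> a \<le> dist y y' \<and> dist y y' \<le> b) \<longrightarrow>
      real (card Y) \<le> C * (b / a) powr s)"

text \<open>Assouad dimension as an extended real (infimum of empty set = infinity).\<close>
definition assouad_dim :: "'a::metric_space set \<Rightarrow> ereal" where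
  "assouad_dim Z = (INF s\<in>{s. assouad_admissible Z s}. ereal s)"

end

theory Submission
  imports Defs
begin

lemma hag_parts:
  assumes "homogeneous_approximation_graph Z V lam \<eta> \<theta> CG NG"
  shows "\<forall>n. finite_open_cover Z (V n)" "V 0 = {Z}" "\<forall>n. \<forall>W\<in>V (Suc n). \<exists>P\<in>V n. W \<subseteq> P"
    "lam > 1" "0 < \<eta>" "\<eta> \<le> \<theta>"
    "\<forall>n\<ge>1. \<forall>U\<in>V n. diameter U \<le> lam powr (1 - real n) * \<theta>"
    "\<forall>n\<ge>1. lebesgue_number Z (V n) \<ge> ereal (lam powr (1 - real n) * \<eta>)"
    "\<forall>n\<ge>1. \<forall>v\<in>V n. card {w\<in>V (Suc n). w \<subseteq> v} \<le> CG"
    "\<forall>n\<ge>1. \<forall>v\<in>V n. card {w\<in>V n. w \<inter> v \<noteq> {}} \<le> NG"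
  using assms unfolding homogeneous_approximation_graph_def by (elim conjE; simp)+

primrec Dset :: "(nat \<Rightarrow> 'a set set) \<Rightarrow> nat \<Rightarrow> 'a set \<Rightarrow> nat \<Rightarrow> 'a set set" where
  "Dset V m v 0 = {w\<in>V m. w \<inter> v \<noteq> {}}"
| "Dset V m v (Suc k) = {w\<in>V (m + Suc k). \<exists>p\<in>Dset V m v k. w \<subseteq> p}"

lemma count_lemma:
  assumes H: "homogeneous_approximation_graph Z V lam \<eta> \<theta> CG NG" and cZ: "compact Z"
  and mv: "v \<in> V m" and Ysub: "Y \<subseteq> v" and fY: "finite Y"
  and sep: "\<forall>y\<in>Y. \<forall>y'\<in>Y. y \<noteq> y' \<longrightarrow> a \<le> dist y y'"
  and diam: "\<forall>w\<in>V n. diameter w < a" and mn: "m \<le> n"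
  shows "card Y \<le> max NG 1 * max (max CG (card (V 1))) 1 ^ (n - m)"
proof -
  define C' where "C' = max (max CG (card (V 1))) 1"
  define N' where "N' = max NG 1"
  have cov: "\<And>n. finite (V n) \<and> (\<forall>U\<in>V n. U \<subseteq> Z) \<and> \<Union>(V n) = Z"
  proof -
    fix n
    have "finite_open_cover Z (V n)" using hag_parts(1)[OF H] by blast
    then have a: "finite (V n)" "\<forall>U\<in>V n. openin (top_of_set Z) U" "\<Union>(V n) = Z"
      unfolding finite_open_cover_def by auto
    have "\<forall>U\<in>V n. U \<subseteq> Z" using a(2) openin_imp_subset by fastforce
    then show "finite (V n) \<and> (\<forall>U\<in>V n. U \<subseteq> Z) \<and> \<Union>(V n) = Z" using a by blast
  qed
  have V0: "V 0 = {Z}" using hag_parts(2)[OF H] by blast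
  have par: "\<And>n W. W \<in> V (Suc n) \<Longrightarrow> \<exists>P\<in>V n. W \<subseteq> P"
    using hag_parts(3)[OF H] by blast
  have hC: "\<And>n v. n \<ge> 1 \<Longrightarrow> v \<in> V n \<Longrightarrow> card {w\<in>V (Suc n). w \<subseteq> v} \<le> CG"
    using hag_parts(9)[OF H] by blast
  have hN: "\<And>n v. n \<ge> 1 \<Longrightarrow> v \<in> V n \<Longrightarrow> card {w\<in>V n. w \<inter> v \<noteq> {}} \<le> NG"
    using hag_parts(10)[OF H] by blast
  have C'1: "\<And>j p. p \<in> V j \<Longrightarrow> card {w\<in>V (Suc j). w \<subseteq> p} \<le> C'"
  proof -
    fix j p assume p: "p \<in> V j"
    show "card {w\<in>V (Suc j). w \<subseteq> p} \<le> C'"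
    proof (cases "j = 0")
      case True
      have "card {w\<in>V (Suc j). w \<subseteq> p} \<le> card (V 1)"
        using True cov[of 1] by (intro card_mono) auto
      then show ?thesis unfolding C'_def by linarith
    next
      case False
      then show ?thesis using hC[of j p] p unfolding C'_def by linarith
    qed
  qed
  have Dsub: "\<And>k. Dset V m v k \<subseteq> V (m + k)"
    by (case_tac k) auto
  have Dfin: "\<And>k. finite (Dset V m v k)"
    by (rule finite_subset[OF Dsub]) (simp add: cov)
  have Dcard: "\<And>k. card (Dset V m v k) \<le> N' * C' ^ k"
  proof -
    fix k show "card (Dset V m v k) \<le> N' * C' ^ k"
    proof (induction k)
      case 0
      show ?case
      proof (cases "m = 0")
        case True
        have "card (Dset V m v 0) \<le> card (V 0)" using cov[of 0] True by (intro card_mono) auto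
        then show ?thesis using True V0 unfolding N'_def by simp
      next
        case False
        then show ?thesis using hN[of m v] mv unfolding N'_def by simp
      qed
    next
      case (Suc k)
      have eq: "Dset V m v (Suc k) = (\<Union>p\<in>Dset V m v k. {w\<in>V (Suc (m + k)). w \<subseteq> p})"
        by auto
      have "card (Dset V m v (Suc k)) \<le> (\<Sum>p\<in>Dset V m v k. card {w\<in>V (Suc (m + k)). w \<subseteq> p})"
        unfolding eq by (rule card_UN_le[OF Dfin])
      also have "\<dots> \<le> (\<Sum>p\<in>Dset V m v k. C')"
        using Dsub by (intro sum_mono C'1) auto
      also have "\<dots> = card (Dset V m v k) * C'" by simp
      also have "\<dots> \<le> N' * C' ^ k * C'" using Suc by simp
      finally show ?case by (simp add: mult_ac)
    qed
  qed
  have Dmem: "\<And>k w y. y \<in> v \<Longrightarrow> w \<in> V (m + k) \<Longrightarrow> y \<in> w \<Longrightarrow> w \<in> Dset V m v k"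
  proof -
    fix k show "\<And>w y. y \<in> v \<Longrightarrow> w \<in> V (m + k) \<Longrightarrow> y \<in> w \<Longrightarrow> w \<in> Dset V m v k"
    proof (induction k)
      case 0 then show ?case by auto
    next
      case (Suc k)
      have "w \<in> V (Suc (m + k))" using Suc.prems by simp
      then obtain p where p: "p \<in> V (m + k)" "w \<subseteq> p" using par by blast
      then have "p \<in> Dset V m v k" using Suc.IH[of y p] Suc.prems by auto
      then show ?case using p Suc.prems by auto
    qed
  qed
  have vZ: "v \<subseteq> Z" using cov mv by blast
  have ex: "\<forall>y\<in>Y. \<exists>w. w \<in> V n \<and> y \<in> w" using cov[of n] Ysub vZ by blast
  then obtain f where f: "\<And>y. y \<in> Y \<Longrightarrow> f y \<in> V n \<and> y \<in> f y" by metis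
  have bZ: "bounded Z" using cZ compact_imp_bounded by blast
  have inj: "inj_on f Y"
  proof (rule inj_onI, rule ccontr)
    fix y y' assume yy: "y \<in> Y" "y' \<in> Y" "f y = f y'" "y \<noteq> y'"
    have "f y \<subseteq> Z" using cov[of n] f[of y] yy(1) by blast
    then have "bounded (f y)" using bZ bounded_subset by blast
    then have "dist y y' \<le> diameter (f y)" using f[of y] f[of y'] yy
      by (intro diameter_bounded_bound) auto
    moreover have "diameter (f y) < a" using diam f[of y] yy by blast
    ultimately show False using sep yy by force
  qed
  have fD: "f ` Y \<subseteq> Dset V m v (n - m)"
    using f Dmem[of _ _ "n - m"] mn Ysub by force
  have "card Y = card (f ` Y)" using card_image[OF inj] by simp
  also have "\<dots> \<le> card (Dset V m v (n - m))" using fD Dfin by (intro card_mono) auto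
  also have "\<dots> \<le> N' * C' ^ (n - m)" by (rule Dcard)
  finally show ?thesis unfolding N'_def C'_def .
qed


lemma powr_log_swap:
  fixes l c t :: real
  assumes "1 < l" "0 < c" "0 < t"
  shows "c powr (log l t) = t powr (log l c)"
  using assms by (simp add: powr_def log_def mult_ac)

lemma main_bound:
  fixes Z :: "'a::metric_space set"
  assumes cZ: "compact Z"
    and H: "homogeneous_approximation_graph Z V lam \<eta> \<theta> CG NG"
  shows "assouad_admissible Z (log lam (real (max (max CG (card (V 1))) 1)))"
proof -
  define C' where "C' = max (max CG (card (V 1))) 1"
  define N' where "N' = max NG 1"
  define s where "s = log lam (real C')"
  define L where "L = log lam (\<theta> / \<eta>)"
  define K where "K = real N' * real C' powr (L + 3)"
  have lam1: "lam > 1" using hag_parts(4)[OF H] .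
  have eta0: "0 < \<eta>" using hag_parts(5)[OF H] .
  have etath: "\<eta> \<le> \<theta>" using hag_parts(6)[OF H] .
  have C'1: "real C' \<ge> 1" unfolding C'_def by simp
  have s0: "s \<ge> 0" unfolding s_def using lam1 C'1 by simp
  have K0: "K \<ge> 0" unfolding K_def by simp
  have cov: "\<And>n. \<Union>(V n) = Z"
    using hag_parts(1)[OF H] unfolding finite_open_cover_def by blast
  have V0: "V 0 = {Z}" using hag_parts(2)[OF H] .
  have diamV: "\<And>n U. n \<ge> 1 \<Longrightarrow> U \<in> V n \<Longrightarrow> diameter U \<le> lam powr (1 - real n) * \<theta>"
    using hag_parts(7)[OF H] by blast
  have lebV: "\<And>n. n \<ge> 1 \<Longrightarrow> lebesgue_number Z (V n) \<ge> ereal (lam powr (1 - real n) * \<eta>)"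
    using hag_parts(8)[OF H] by blast
  have key: "real (card Y) \<le> K * (b / a) powr s"
    if a0: "0 < a" and ab: "a \<le> b" and YZ: "Y \<subseteq> Z" and fY: "finite Y"
      and sepY: "\<forall>y\<in>Y. \<forall>y'\<in>Y. y \<noteq> y' \<longrightarrow> a \<le> dist y y' \<and> dist y y' \<le> b" for a b Y
  proof (cases "Y = {}")
    case True
    then show ?thesis using K0 by simp
  next
    case False
    then obtain y0 where y0: "y0 \<in> Y" by blast
    have b0: "0 < b" using a0 ab by linarith
    define x where "x = log lam (\<theta> / a)"
    define y where "y = log lam (\<eta> / b)"
    define n where "n = nat \<lceil>x\<rceil> + 2"
    have xy: "y \<le> x" unfolding x_def y_def using a0 b0 ab eta0 etath lam1
      by (subst log_le_cancel_iff) (auto simp: frac_le)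
    have xyL: "x - y = log lam (b / a) + L"
      unfolding x_def y_def L_def using a0 b0 eta0 etath
      by (simp add: log_divide_pos log_mult_pos)
    have xn: "x < real n - 1" unfolding n_def by linarith
    have "\<theta> / a < lam powr (real n - 1)"
      using xn lam1 a0 eta0 etath unfolding x_def by (subst log_less_iff[symmetric]) auto
    then have "lam powr (1 - real n) * \<theta> < a"
    proof -
      assume h: "\<theta> / a < lam powr (real n - 1)"
      have e: "lam powr (1 - real n) = inverse (lam powr (real n - 1))"
        using powr_minus[of lam "real n - 1"] by simp
      have p: "lam powr (real n - 1) > 0" using lam1 by simp
      from h a0 p have "\<theta> < a * lam powr (real n - 1)" by (simp add: field_simps)
      then show ?thesis unfolding e using p by (simp add: field_simps)
    qed
    then have diam: "\<forall>w\<in>V n. diameter w < a"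
      using diamV[of n] unfolding n_def by fastforce
    obtain m v where mv: "m \<le> n" "v \<in> V m" "Y \<subseteq> v" "real n - real m \<le> x - y + 3"
    proof (cases "b < \<eta>")
      case True
      have y0': "y > 0" unfolding y_def using True b0 lam1 by simp
      define m where "m = nat \<lceil>y\<rceil>"
      have m1: "m \<ge> 1" unfolding m_def using y0' by linarith
      have mn: "m \<le> n" unfolding m_def n_def using xy by linarith
      have my: "real m - 1 < y" unfolding m_def using y0' by linarith
      have "lam powr (real m - 1) < \<eta> / b"
        using my lam1 b0 eta0 unfolding y_def by (subst less_log_iff[symmetric]) auto
      then have bl: "b < lam powr (1 - real m) * \<eta>"
      proof -
        assume h: "lam powr (real m - 1) < \<eta> / b"
        have e: "lam powr (1 - real m) = inverse (lam powr (real m - 1))"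
          using powr_minus[of lam "real m - 1"] by simp
        have p: "lam powr (real m - 1) > 0" using lam1 by simp
        from h b0 p have "b * lam powr (real m - 1) < \<eta>" by (simp add: field_simps)
        then show ?thesis unfolding e using p by (simp add: field_simps)
      qed
      have y0Z: "y0 \<in> Z" using y0 YZ by blast
      have l1: "ereal b < lebesgue_number Z (V m)"
        by (rule less_le_trans[OF _ lebV[OF m1]]) (simp add: bl)
      have l2: "lebesgue_number Z (V m) \<le> (SUP U\<in>V m. dist_compl Z U y0)"
        unfolding lebesgue_number_def by (rule INF_lower[OF y0Z])
      have "ereal b < (SUP U\<in>V m. dist_compl Z U y0)"
        by (rule less_le_trans[OF l1 l2])
      then obtain U where U: "U \<in> V m" "ereal b < dist_compl Z U y0"
        unfolding less_SUP_iff by blast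
      have YU: "Y \<subseteq> U"
      proof
        fix z assume z: "z \<in> Y"
        show "z \<in> U"
        proof (rule ccontr)
          assume "z \<notin> U"
          then have zc: "z \<in> Z - U" using z YZ by blast
          then have "dist_compl Z U y0 = ereal (infdist y0 (Z - U))"
            unfolding dist_compl_def by auto
          moreover have "infdist y0 (Z - U) \<le> dist y0 z" using zc by (rule infdist_le)
          moreover have "dist y0 z \<le> b" using sepY y0 z b0 by (cases "y0 = z") auto
          ultimately show False using U(2) by simp
        qed
      qed
      have "real n - real m \<le> x - y + 3"
        unfolding m_def n_def using y0' xy by linarith
      then show ?thesis using that[of m U] mn U(1) YU by blast
    next
      case False
      have "y \<le> 0" unfolding y_def using False b0 eta0 lam1 by simp
      then have "real n - real 0 \<le> x - y + 3" unfolding n_def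
        using xy by linarith
      then show ?thesis using that[of 0 Z] V0 YZ by auto
    qed
    have cY: "card Y \<le> N' * C' ^ (n - m)"
      unfolding N'_def C'_def
      by (rule count_lemma[OF H cZ mv(2) mv(3) fY _ diam mv(1)]) (use sepY in blast)
    have r1: "real (card Y) \<le> real N' * real C' ^ (n - m)"
      using cY by (metis of_nat_le_iff of_nat_mult of_nat_power)
    have "real C' ^ (n - m) = real C' powr (real n - real m)"
      using C'1 mv(1) by (simp add: powr_realpow[symmetric] of_nat_diff)
    also have "\<dots> \<le> real C' powr (log lam (b / a) + L + 3)"
      using mv(4) xyL C'1 by (intro powr_mono) auto
    also have "\<dots> = real C' powr (L + 3) * (b / a) powr s"
      unfolding s_def using powr_log_swap[of lam "real C'" "b / a"] lam1 C'1 a0 b0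
      by (simp add: powr_add mult_ac)
    finally have r2: "real C' ^ (n - m) \<le> real C' powr (L + 3) * (b / a) powr s" .
    have "real (card Y) \<le> real N' * (real C' powr (L + 3) * (b / a) powr s)"
      using r1 mult_left_mono[OF r2, of "real N'"] by simp
    then show ?thesis unfolding K_def by (simp add: mult_ac)
  qed
  have "assouad_admissible Z s" unfolding assouad_admissible_def
    apply (intro conjI exI[of _ K] allI impI)
     apply (rule s0)
    apply (rule key)
        apply assumption+
    done
  then show ?thesis unfolding s_def C'_def .
qed

theorem proposition3p2:
  fixes Z :: "'a::metric_space set"
  assumes "compact Z"
    and "homogeneous_approximation_graph Z \<V> lam \<eta> \<theta> C\<Gamma> N\<Gamma>"
  shows "assouad_dim Z < \<infinity>"
proof -
  have "assouad_dim Z \<le> ereal (log lam (real (max (max C\<Gamma> (card (\<V> 1))) 1)))"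
    unfolding assouad_dim_def using main_bound[OF assms] by (intro INF_lower) auto
  moreover have "ereal (log lam (real (max (max C\<Gamma> (card (\<V> 1))) 1))) < \<infinity>" by simp
  ultimately show ?thesis by (rule order.strict_trans1)
qed

end
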